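(* Let $0<\beta_1<\beta_2$. There is a unique $a=a(\beta_1,\beta_2)\in(0,1/\beta_1)$ satisfying $$a\beta_1-1+(a\beta_2+1)e^{-a(\beta_1+\beta_2)}=0.$$ Moreover, $\lim_{\beta_1/\beta_2\to0} a(\beta_1,\beta_2)\,\beta_1=1$. *)

theory Defs
  imports Complex_Main
begin

definition root_eq :: "real \<Rightarrow> real \<Rightarrow> real \<Rightarrow> bool" where
  "root_eq b1 b2 a \<longleftrightarrow> a * b1 - 1 + (a * b2 + 1) * exp (- a * (b1 + b2)) = 0"

definition a_of :: "real \<Rightarrow> real \<Rightarrow> real" where
  "a_of b1 b2 = (THE a. a \<in> {0<..<1 / b1} \<and> root_eq b1 b2 a)"

end

theory Submission
  imports Defs
begin

definition hh :: "real \<Rightarrow> real \<Rightarrow> real \<Rightarrow> real" where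
  "hh b1 b2 a = (1 - a*b1) * exp (a*(b1+b2)) - a*b2 - 1"

lemma root_eq_iff: "root_eq b1 b2 a \<longleftrightarrow> hh b1 b2 a = 0"
proof -
  have E: "exp (- a * (b1 + b2)) = inverse (exp (a*(b1+b2)))"
    by (simp add: exp_minus[symmetric])
  have pos: "exp (a*(b1+b2)) > 0" by simp
  show ?thesis unfolding root_eq_def hh_def E using pos
    by (auto simp: field_simps)
qed

lemma hh_facts:
  fixes b1 b2 :: real
  assumes b1: "0 < b1" and b12: "b1 < b2"
  shows "\<exists>!a. a \<in> {0<..<1/b1} \<and> hh b1 b2 a = 0"
proof -
  define s where "s = b1 + b2"
  have s: "s > 0" using b1 b12 unfolding s_def by simp
  define h where "h = hh b1 b2"
  define h1 where "h1 = (\<lambda>a. exp (a*s) * (b2 - s*b1*a) - b2)"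
  define h2 where "h2 = (\<lambda>a. s * exp (a*s) * (b2 - b1 - s*b1*a))"
  have hd: "DERIV h x :> h1 x" for x
    unfolding h_def h1_def hh_def s_def[symmetric]
    by (auto intro!: derivative_eq_intros simp: algebra_simps s_def)
  have h1d: "DERIV h1 x :> h2 x" for x
    unfolding h1_def h2_def
    by (auto intro!: derivative_eq_intros simp: algebra_simps)
  have hc: "continuous_on A h" for A
    using hd by (meson DERIV_isCont continuous_at_imp_continuous_on)
  define a0 where "a0 = (b2 - b1) / (s*b1)"
  have a0pos: "a0 > 0" unfolding a0_def using b1 b12 s by simp
  have a0lt: "a0 < 1/b1" unfolding a0_def using b1 b12 s
    by (simp add: divide_simps s_def)
  have h2pos: "h2 z > 0" if "z < a0" for z
  proof -
    have "s*b1*z < b2 - b1" using that b1 s unfolding a0_def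
      by (simp add: field_simps)
    then show ?thesis unfolding h2_def using s by simp
  qed
  have h2neg: "h2 z < 0" if "z > a0" for z
  proof -
    have "s*b1*z > b2 - b1" using that b1 s unfolding a0_def
      by (simp add: field_simps)
    then show ?thesis unfolding h2_def using s by (simp add: mult_pos_neg)
  qed
  have h10: "h1 0 = 0" unfolding h1_def by simp
  have h0: "h 0 = 0" unfolding h_def hh_def by simp
  have h1pos: "h1 x > 0" if "0 < x" "x \<le> a0" for x
  proof -
    obtain z where z: "0 < z" "z < x" "h1 x - h1 0 = (x - 0) * h2 z"
      using MVT2[of 0 x h1 h2, OF _ h1d] \<open>0 < x\<close> by blast
    have "h2 z > 0" using h2pos z that by simp
    then show ?thesis using z h10 that by simp
  qed
  have hpos: "h x > 0" if "0 < x" "x \<le> a0" for x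
  proof -
    obtain z where z: "0 < z" "z < x" "h x - h 0 = (x - 0) * h1 z"
      using MVT2[of 0 x h h1, OF _ hd] \<open>0 < x\<close> by blast
    have "h1 z > 0" using h1pos z that by simp
    then show ?thesis using z h0 that by simp
  qed
  have h1dec: "h1 v < h1 u" if "a0 \<le> u" "u < v" for u v
  proof -
    obtain z where z: "u < z" "z < v" "h1 v - h1 u = (v - u) * h2 z"
      using MVT2[of u v h1 h2, OF _ h1d] \<open>u < v\<close> by blast
    have "h2 z < 0" using h2neg z that by simp
    then have "(v - u) * h2 z < 0" using that by (simp add: mult_pos_neg)
    then show ?thesis using z by simp
  qed
  have hend: "h (1/b1) < 0" unfolding h_def hh_def using b1 b12 by (simp add: less_le_trans[of "-1" 0 "b2/b1"])
  have ha0: "h a0 > 0" using hpos a0pos by simp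
  obtain c where c: "a0 \<le> c" "c \<le> 1/b1" "h c = 0"
    using IVT2'[of h "1/b1" 0 a0] hend ha0 a0lt hc by force
  have cin: "c \<in> {0<..<1/b1}" using c ha0 hend a0pos
    by (cases "c = a0"; cases "c = 1/b1"; auto)
  have uniq: False if "c' \<in> {0<..<1/b1}" "d' \<in> {0<..<1/b1}" "h c' = 0" "h d' = 0" "c' < d'" for c' d'
  proof -
    have "c' > a0" using hpos[of c'] that by (cases "c' \<le> a0") auto
    obtain z1 where z1: "a0 < z1" "z1 < c'" "h c' - h a0 = (c' - a0) * h1 z1"
      using MVT2[of a0 c' h h1, OF _ hd] \<open>c' > a0\<close> by blast
    have "h1 z1 < 0"
    proof (rule ccontr)
      assume "\<not> h1 z1 < 0"
      then have "(c' - a0) * h1 z1 \<ge> 0" using \<open>c' > a0\<close> by simp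
      then show False using z1 ha0 that by simp
    qed
    obtain z2 where z2: "c' < z2" "z2 < d'" "h d' - h c' = (d' - c') * h1 z2"
      using MVT2[of c' d' h h1, OF _ hd] \<open>c' < d'\<close> by blast
    have "h1 z2 = 0" using z2 that by simp
    moreover have "h1 z2 < h1 z1" using h1dec[of z1 z2] z1 z2 by simp
    ultimately show False using \<open>h1 z1 < 0\<close> by simp
  qed
  show ?thesis
  proof (rule ex1I[of _ c])
    show "c \<in> {0<..<1/b1} \<and> hh b1 b2 c = 0" using cin c unfolding h_def by simp
  next
    fix d assume d: "d \<in> {0<..<1/b1} \<and> hh b1 b2 d = 0"
    show "d = c"
    proof (rule ccontr)
      assume "d \<noteq> c"
      then consider "d < c" | "c < d" by linarith
      then show False
        using uniq[of d c] uniq[of c d] d cin c unfolding h_def by auto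
    qed
  qed
qed

lemma a_of_prop:
  assumes "0 < b1" "b1 < b2"
  shows "a_of b1 b2 \<in> {0<..<1/b1} \<and> hh b1 b2 (a_of b1 b2) = 0"
proof -
  have "\<exists>!a. a \<in> {0<..<1/b1} \<and> root_eq b1 b2 a"
    using hh_facts[OF assms] by (simp add: root_eq_iff)
  then have "a_of b1 b2 \<in> {0<..<1/b1} \<and> root_eq b1 b2 (a_of b1 b2)"
    unfolding a_of_def by (rule theI')
  then show ?thesis by (simp add: root_eq_iff)
qed

lemma a_of_gt:
  assumes b: "0 < b1" "b1 < b2" and y: "0 < y" "y < 1/b1" "hh b1 b2 y > 0"
  shows "y < a_of b1 b2"
proof (rule ccontr)
  assume "\<not> y < a_of b1 b2"
  then have cy: "a_of b1 b2 \<le> y" by simp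
  have hc: "continuous_on A (hh b1 b2)" for A
    unfolding hh_def by (intro continuous_intros)
  have hend: "hh b1 b2 (1/b1) < 0" unfolding hh_def using b by (simp add: less_le_trans[of "-1" 0 "b2/b1"])
  obtain d where d: "y \<le> d" "d \<le> 1/b1" "hh b1 b2 d = 0"
    using IVT2'[of "hh b1 b2" "1/b1" 0 y] hend y hc by force
  have "d \<noteq> y" "d \<noteq> 1/b1" using d y hend by auto
  then have din: "d \<in> {0<..<1/b1}" using d y by auto
  have "d = a_of b1 b2"
    using hh_facts[OF b] din d a_of_prop[OF b] by blast
  then show False using cy d \<open>d \<noteq> y\<close> by simp
qed

theorem lemma2p2:
  fixes \<beta>1 \<beta>2 :: real
  assumes "0 < \<beta>1" and "\<beta>1 < \<beta>2"
  shows "(\<exists>!a. a \<in> {0<..<1 / \<beta>1} \<and> root_eq \<beta>1 \<beta>2 a)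
    \<and> (\<forall>\<epsilon>>0. \<exists>\<delta>>0. \<forall>b1 b2. 0 < b1 \<and> b1 < b2 \<and> b1 / b2 < \<delta>
          \<longrightarrow> \<bar>a_of b1 b2 * b1 - 1\<bar> < \<epsilon>)"
proof
  show "\<exists>!a. a \<in> {0<..<1 / \<beta>1} \<and> root_eq \<beta>1 \<beta>2 a"
    using hh_facts[OF assms] by (simp add: root_eq_iff)
next
  show "\<forall>\<epsilon>>0. \<exists>\<delta>>0. \<forall>b1 b2. 0 < b1 \<and> b1 < b2 \<and> b1 / b2 < \<delta>
          \<longrightarrow> \<bar>a_of b1 b2 * b1 - 1\<bar> < \<epsilon>"
  proof (intro allI impI)
    fix \<epsilon> :: real assume ep: "\<epsilon> > 0"
    define e where "e = min \<epsilon> (1/2)"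
    have e: "0 < e" "e \<le> 1/2" "e \<le> \<epsilon>" unfolding e_def using ep by auto
    define \<delta> where "\<delta> = e * (1-e)^2 / 4"
    have dpos: "\<delta> > 0" unfolding \<delta>_def using e by simp
    show "\<exists>\<delta>>0. \<forall>b1 b2. 0 < b1 \<and> b1 < b2 \<and> b1 / b2 < \<delta>
          \<longrightarrow> \<bar>a_of b1 b2 * b1 - 1\<bar> < \<epsilon>"
    proof (intro exI[of _ \<delta>] conjI allI impI dpos)
      fix b1 b2 :: real assume H: "0 < b1 \<and> b1 < b2 \<and> b1 / b2 < \<delta>"
      then have b: "0 < b1" "b1 < b2" by auto
      define r where "r = b2 / b1"
      have r0: "r > 0" unfolding r_def using b by simp
      have rd: "\<delta> * r > 1"
      proof -
        have "b1 < \<delta> * b2" using H b by (simp add: divide_simps)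
        then show ?thesis unfolding r_def using b by (simp add: field_simps)
      qed
      define y where "y = (1 - e) / b1"
      have y: "0 < y" "y < 1/b1" unfolding y_def using e b by (auto simp: divide_simps)
      define t where "t = (1-e)*(1+r)"
      have t0: "t > 0" unfolding t_def using e r0 by simp
      have hy: "hh b1 b2 y = e * exp t - (1-e)*r - 1"
        unfolding hh_def y_def t_def r_def using b r0 unfolding r_def by (simp add: field_simps)
      have "exp t = exp (t/2)^2" by (simp add: exp_double[symmetric])
      moreover have "exp (t/2) \<ge> 1 + t/2" by (rule exp_ge_add_one_self)
      ultimately have et: "exp t \<ge> (1 + t/2)^2"
        using t0 by (metis power_mono add_nonneg_nonneg zero_le_one half_gt_zero less_imp_le)
      have "(1 + t/2)^2 > t^2/4" using t0 by (simp add: power2_eq_square field_simps)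
      with et have "exp t > t^2/4" by simp
      then have "e * exp t > e * (t^2/4)" using e by simp
      moreover have "e * (t^2/4) = \<delta> * (1+r)^2" unfolding t_def \<delta>_def
        by (simp add: power2_eq_square field_simps)
      moreover have "\<delta> * (1+r)^2 > (1+r)"
      proof -
        have "\<delta> * (1+r) > 1" using rd dpos by (simp add: algebra_simps)
        then have "(\<delta> * (1+r)) * (1+r) > 1 * (1+r)" using r0 by (intro mult_strict_right_mono) auto
        then show ?thesis by (simp add: power2_eq_square algebra_simps)
      qed
      moreover have "(1-e)*r + 1 \<le> 1 + r" using e r0 by (simp add: algebra_simps)
      ultimately have "hh b1 b2 y > 0" using hy by linarith
      then have ya: "y < a_of b1 b2" using a_of_gt[OF b y] by simp
      have "a_of b1 b2 < 1/b1" using a_of_prop[OF b] by simp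
      then have lt1: "a_of b1 b2 * b1 < 1" using b by (simp add: field_simps)
      have "1 - e < a_of b1 b2 * b1" using ya b unfolding y_def by (simp add: field_simps)
      then show "\<bar>a_of b1 b2 * b1 - 1\<bar> < \<epsilon>" using lt1 e by simp
    qed
  qed
qed

end
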